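(* Let $d\geq 1$ and $\delta\in\{1,2,3\}$. Every $d$-dimensional cube packing with $2^d-\delta$ cubes can be extended to a cube tiling, i.e. there is a $d$-dimensional cube tiling containing all cubes of the packing.
   Context: A $d$-dimensional cube packing is a $4\mathbb{Z}^d$-invariant set of pairwise disjoint translates $z+[0,2[^d$ with $z\in\mathbb{Z}^d$; equivalently a set of representatives $x\in\{0,1,2,3\}^d$ of the $4\mathbb{Z}^d$-orbits of its cubes, two representatives $x,x'$ giving disjoint cubes iff $|x_i-x'_i|=2$ for some coordinate $i$. Its number of cubes is the number of orbits. A cube tiling is a cube packing whose cubes cover $\mathbb{R}^d$ (equivalently, one with $2^d$ cubes). *)

theory Defs
  imports Main
begin

text \<open>Representatives of the 4Z^d-orbits of cubes z + [0,2[^d: points x in {0,1,2,3}^d,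
  encoded as functions nat => int that are 0 outside the coordinates 0..d-1.\<close>
definition cube_reps :: "nat \<Rightarrow> (nat \<Rightarrow> int) set" where
  "cube_reps d = {x. (\<forall>i<d. x i \<in> {0..3}) \<and> (\<forall>i\<ge>d. x i = 0)}"

text \<open>Two representatives give disjoint cubes iff they differ by 2 in some coordinate.\<close>
definition cube_packing :: "nat \<Rightarrow> (nat \<Rightarrow> int) set \<Rightarrow> bool" where
  "cube_packing d P \<longleftrightarrow> P \<subseteq> cube_reps d \<and>
     (\<forall>x\<in>P. \<forall>y\<in>P. x \<noteq> y \<longrightarrow> (\<exists>i<d. \<bar>x i - y i\<bar> = 2))"

definition cube_tiling :: "nat \<Rightarrow> (nat \<Rightarrow> int) set \<Rightarrow> bool" where
  "cube_tiling d T \<longleftrightarrow> cube_packing d T \<and> card T = 2 ^ d"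

end

theory Submission
  imports Defs
begin


definition cov :: "nat \<Rightarrow> (nat \<Rightarrow> int) \<Rightarrow> (nat \<Rightarrow> int) \<Rightarrow> bool" where
  "cov d x z \<longleftrightarrow> (\<forall>i<d. (z i - x i) mod 4 \<in> {0,1})"
definition hole :: "nat \<Rightarrow> (nat \<Rightarrow> int) set \<Rightarrow> (nat \<Rightarrow> int) \<Rightarrow> bool" where
  "hole d P z \<longleftrightarrow> (\<forall>x\<in>P. \<not> cov d x z)"
definition free :: "nat \<Rightarrow> (nat \<Rightarrow> int) set \<Rightarrow> (nat \<Rightarrow> int) \<Rightarrow> bool" where
  "free d P y \<longleftrightarrow> (\<forall>x\<in>P. \<exists>i<d. \<bar>x i - y i\<bar> = 2)"
definition lay :: "nat \<Rightarrow> (nat \<Rightarrow> int) set \<Rightarrow> int \<Rightarrow> (nat \<Rightarrow> int) set" where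
  "lay n P c = (\<lambda>x. x(n:=0)) ` {x\<in>P. x n = c \<or> x n = (c+3) mod 4}"

lemma cases4: "(a::int) \<in> {0..3} \<Longrightarrow> a = 0 \<or> a = 1 \<or> a = 2 \<or> a = 3" by auto

lemma C1: fixes a b t :: int assumes "a \<in> {0..3}" "b \<in> {0..3}" "\<bar>a-b\<bar> = 2" "(t-a) mod 4 \<in> {0,1}"
   "(t-b) mod 4 \<in> {0,1}" shows False
proof -
  have t: "t mod 4 \<in> {0..3}" for t :: int by auto
  have e: "(t - a) mod 4 = (t mod 4 - a) mod 4" "(t-b) mod 4 = (t mod 4 - b) mod 4" by (simp_all add: mod_diff_left_eq)
  show False using cases4[OF assms(1)] cases4[OF assms(2)] cases4[OF t[of t]] assms(3-5) unfolding e
    by (elim disjE) (simp_all)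
qed

lemma C2: "a \<in> {0..3} \<Longrightarrow> b \<in> {0..3} \<Longrightarrow> \<bar>a-b\<bar> \<noteq> 2 \<Longrightarrow>
   (let t = (if (b - a) mod 4 = 1 then b else a) in t \<in> {0..3} \<and> (t-a) mod 4 \<in> {0,1} \<and> (t-b) mod 4 \<in> {0,1})" for a b :: int
  by (drule cases4)+ (elim disjE; simp)

lemma C3: "a \<in> {0..3} \<Longrightarrow> x \<in> {0..3} \<Longrightarrow> y \<in> {0..3} \<Longrightarrow> \<bar>x-a\<bar> = 2 \<Longrightarrow> \<bar>x-y\<bar> = 2 \<Longrightarrow> y = a" for a x y :: int
  by (drule cases4)+ (elim disjE; simp)

lemma layer_arith: "a \<in> {0..3} \<Longrightarrow> c \<in> {0..3} \<Longrightarrow> ((c - a) mod 4 \<in> {0,1}) \<longleftrightarrow> (a = c \<or> a = (c+3) mod 4)"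
  for a c :: int by (drule cases4)+ (elim disjE; simp)

lemma l4: "c \<in> {0..3} \<Longrightarrow> a \<in> {0..3} \<Longrightarrow> a = c \<or> a = (c+3) mod 4 \<or> a = (c+2) mod 4 \<or> a = ((c+2) mod 4+3) mod 4"
  for a c :: int by (drule cases4)+ (elim disjE; simp)
lemma l5: "c \<in> {0..3} \<Longrightarrow> (a = c \<or> a = (c+3) mod 4) \<Longrightarrow> (a = (c+2) mod 4 \<or> a = ((c+2) mod 4+3) mod 4) \<Longrightarrow> False"
  for a c :: int by (drule cases4)+ (elim disjE; simp; linarith?)
lemma l6: "c \<in> {0..3} \<Longrightarrow> (a = c \<or> a = (c+3) mod 4) \<Longrightarrow> (b = c \<or> b = (c+3) mod 4) \<Longrightarrow> \<bar>a - b\<bar> \<noteq> 2"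
  for a b c :: int by (drule cases4)+ (elim disjE; auto)

lemma reps_Suc: "x \<in> cube_reps (Suc n) \<Longrightarrow> x(n:=0) \<in> cube_reps n"
  by (auto simp: cube_reps_def)

lemma reps_upd: "w \<in> cube_reps n \<Longrightarrow> t \<in> {0..3} \<Longrightarrow> w(n:=t) \<in> cube_reps (Suc n)"
  by (auto simp: cube_reps_def less_Suc_eq)

lemma finite_reps: "finite (cube_reps d)"
proof (induction d)
  case 0
  have "cube_reps 0 \<subseteq> {\<lambda>_. 0}" by (auto simp: cube_reps_def)
  then show ?case using finite_subset by blast
next
  case (Suc n)
  have "cube_reps (Suc n) \<subseteq> (\<lambda>(w,t). w(n:=t)) ` (cube_reps n \<times> {0..3})"
  proof
    fix x assume x: "x \<in> cube_reps (Suc n)"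
    have "x = (\<lambda>(w,t). w(n:=t)) (x(n:=0), x n)" by auto
    moreover have "x n \<in> {0..3}" using x by (auto simp: cube_reps_def)
    ultimately show "x \<in> (\<lambda>(w,t). w(n:=t)) ` (cube_reps n \<times> {0..3})"
      using reps_Suc[OF x] by blast
  qed
  then show ?case using Suc finite_subset by blast
qed

lemma disj_cells:
  assumes x: "x \<in> cube_reps d" and y: "y \<in> cube_reps d"
  shows "(\<exists>i<d. \<bar>x i - y i\<bar> = 2) \<longleftrightarrow> \<not> (\<exists>z\<in>cube_reps d. cov d x z \<and> cov d y z)"
proof
  assume "\<exists>i<d. \<bar>x i - y i\<bar> = 2"
  then obtain i where i: "i < d" "\<bar>x i - y i\<bar> = 2" by blast
  show "\<not> (\<exists>z\<in>cube_reps d. cov d x z \<and> cov d y z)"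
  proof
    assume "\<exists>z\<in>cube_reps d. cov d x z \<and> cov d y z"
    then obtain z where "cov d x z" "cov d y z" by blast
    then have h1: "(z i - x i) mod 4 \<in> {0,1}" "(z i - y i) mod 4 \<in> {0,1}" using i by (auto simp: cov_def)
    have h2: "x i \<in> {0..3}" "y i \<in> {0..3}" using x y i by (auto simp: cube_reps_def)
    show False by (rule C1[OF h2 i(2) h1])
  qed
next
  assume h: "\<not> (\<exists>z\<in>cube_reps d. cov d x z \<and> cov d y z)"
  show "\<exists>i<d. \<bar>x i - y i\<bar> = 2"
  proof (rule ccontr)
    assume nd: "\<not> (\<exists>i<d. \<bar>x i - y i\<bar> = 2)"
    define z where "z = (\<lambda>i. if i < d then (if (y i - x i) mod 4 = 1 then y i else x i) else 0)"
    have zi: "z i \<in> {0..3} \<and> (z i - x i) mod 4 \<in> {0,1} \<and> (z i - y i) mod 4 \<in> {0,1}" if i: "i < d" for i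
    proof -
      have "x i \<in> {0..3}" "y i \<in> {0..3}" using x y i by (auto simp: cube_reps_def)
      moreover have "\<bar>x i - y i\<bar> \<noteq> 2" using nd i by blast
      ultimately have "let t = (if (y i - x i) mod 4 = 1 then y i else x i) in t \<in> {0..3} \<and> (t - x i) mod 4 \<in> {0,1} \<and> (t - y i) mod 4 \<in> {0,1}"
        by (rule C2)
      then show ?thesis using i unfolding Let_def z_def by simp
    qed
    have "z \<in> cube_reps d" using zi by (auto simp: cube_reps_def z_def)
    moreover have "cov d x z" "cov d y z" using zi by (auto simp: cov_def)
    ultimately show False using h by blast
  qed
qed

lemma free_cells:
  assumes y: "y \<in> cube_reps d" and P: "P \<subseteq> cube_reps d"
  shows "free d P y \<longleftrightarrow> (\<forall>z\<in>cube_reps d. cov d y z \<longrightarrow> hole d P z)"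
proof -
  have "(\<exists>i<d. \<bar>x i - y i\<bar> = 2) \<longleftrightarrow> (\<forall>z\<in>cube_reps d. cov d y z \<longrightarrow> \<not> cov d x z)" if "x \<in> P" for x
    using disj_cells[of x d y] that P y by blast
  then show ?thesis unfolding free_def hole_def by blast
qed

lemma cov_Suc: "cov (Suc n) x z \<longleftrightarrow> cov n x z \<and> (z n - x n) mod 4 \<in> {0,1}"
  by (auto simp: cov_def less_Suc_eq)

lemma cov_upd1: "i \<ge> n \<Longrightarrow> cov n (x(i:=a)) z \<longleftrightarrow> cov n x z"
  by (auto simp: cov_def)

lemma cov_upd2: "i \<ge> n \<Longrightarrow> cov n x (z(i:=a)) \<longleftrightarrow> cov n x z"
  by (auto simp: cov_def)

lemma hole_layer:
  assumes P: "P \<subseteq> cube_reps (Suc n)" and c: "c \<in> {0..3}"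
  shows "hole (Suc n) P (w(n:=c)) \<longleftrightarrow> hole n (lay n P c) w"
proof -
  have "cov (Suc n) x (w(n:=c)) \<longleftrightarrow> (x n = c \<or> x n = (c+3) mod 4) \<and> cov n (x(n:=0)) w" if "x \<in> P" for x
  proof -
    have "x n \<in> {0..3}" using P that by (auto simp: cube_reps_def)
    then show ?thesis using layer_arith[OF _ c, of "x n"] by (auto simp: cov_Suc cov_upd1 cov_upd2)
  qed
  then show ?thesis by (auto simp: hole_def lay_def)
qed

lemma lay_pack:
  assumes P: "cube_packing (Suc n) P" and c: "c \<in> {0..3}"
  shows "cube_packing n (lay n P c)" and "inj_on (\<lambda>x. x(n:=0)) {x\<in>P. x n = c \<or> x n = (c+3) mod 4}"
proof -
  have key: "\<exists>i<n. \<bar>x i - y i\<bar> = 2" if xy: "x \<in> P" "y \<in> P" "x \<noteq> y"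
     "x n = c \<or> x n = (c+3) mod 4" "y n = c \<or> y n = (c+3) mod 4" for x y
  proof -
    have "\<forall>x\<in>P. \<forall>y\<in>P. x \<noteq> y \<longrightarrow> (\<exists>i<Suc n. \<bar>x i - y i\<bar> = 2)"
      using P by (simp add: cube_packing_def)
    then obtain i where i: "i < Suc n" "\<bar>x i - y i\<bar> = 2" using xy(1-3) by blast
    have "i \<noteq> n"
    proof
      assume "i = n"
      then have "\<bar>x n - y n\<bar> = 2" using i(2) by simp
      then show False using l6[OF c xy(4,5)] by simp
    qed
    then have "i < n" using i(1) by simp
    then show ?thesis using i(2) by blast
  qed
  show "inj_on (\<lambda>x. x(n:=0)) {x\<in>P. x n = c \<or> x n = (c+3) mod 4}"
  proof (rule inj_onI)
    fix x y assume xy: "x \<in> {x\<in>P. x n = c \<or> x n = (c+3) mod 4}" "y \<in> {x\<in>P. x n = c \<or> x n = (c+3) mod 4}"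
      "x(n:=0) = y(n:=0)"
    show "x = y"
    proof (rule ccontr)
      assume "x \<noteq> y"
      then obtain i where i: "i < n" "\<bar>x i - y i\<bar> = 2" using key xy(1,2) by blast
      have "x i = y i" using fun_cong[OF xy(3), of i] i(1) by simp
      then show False using i(2) by simp
    qed
  qed
  have sub: "lay n P c \<subseteq> cube_reps n"
  proof
    fix x' assume "x' \<in> lay n P c"
    then obtain x where "x \<in> P" "x' = x(n:=0)" unfolding lay_def by blast
    then show "x' \<in> cube_reps n" using P reps_Suc unfolding cube_packing_def by blast
  qed
  have "\<forall>x'\<in>lay n P c. \<forall>y'\<in>lay n P c. x' \<noteq> y' \<longrightarrow> (\<exists>i<n. \<bar>x' i - y' i\<bar> = 2)"
  proof (intro ballI impI)
    fix x' y' assume a: "x' \<in> lay n P c" "y' \<in> lay n P c" "x' \<noteq> y'"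
    obtain x where x: "x \<in> P" "x n = c \<or> x n = (c+3) mod 4" "x' = x(n:=0)" using a(1) unfolding lay_def by blast
    obtain y where y: "y \<in> P" "y n = c \<or> y n = (c+3) mod 4" "y' = y(n:=0)" using a(2) unfolding lay_def by blast
    have "x \<noteq> y" using a(3) x(3) y(3) by blast
    then obtain i where i: "i < n" "\<bar>x i - y i\<bar> = 2" using key x(1,2) y(1,2) by blast
    then have "\<bar>x' i - y' i\<bar> = 2" using x(3) y(3) by simp
    then show "\<exists>i<n. \<bar>x' i - y' i\<bar> = 2" using i(1) by blast
  qed
  then show "cube_packing n (lay n P c)" using sub unfolding cube_packing_def by blast
qed

lemma card_lay:
  assumes P: "cube_packing (Suc n) P" and c: "c \<in> {0..3}"
  shows "card (lay n P c) = card {x\<in>P. x n = c \<or> x n = (c+3) mod 4}"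
  unfolding lay_def using card_image[OF lay_pack(2)[OF P c]] .

lemma card_lay_pair:
  assumes P: "cube_packing (Suc n) P" and c: "c \<in> {0..3}"
  shows "card (lay n P c) + card (lay n P ((c+2) mod 4)) = card P"
proof -
  have c2: "(c+2) mod 4 \<in> {0..3}" by simp
  have fin: "finite P" using P finite_reps finite_subset unfolding cube_packing_def by blast
  define A where "A = {x\<in>P. x n = c \<or> x n = (c+3) mod 4}"
  define B where "B = {x\<in>P. x n = (c+2) mod 4 \<or> x n = ((c+2) mod 4+3) mod 4}"
  have "P \<subseteq> A \<union> B"
  proof
    fix x assume x: "x \<in> P"
    then have "x n \<in> {0..3}" using P unfolding cube_packing_def cube_reps_def by auto
    then have "x n = c \<or> x n = (c+3) mod 4 \<or> x n = (c+2) mod 4 \<or> x n = ((c+2) mod 4+3) mod 4"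
      by (rule l4[OF c])
    then show "x \<in> A \<union> B" using x unfolding A_def B_def by blast
  qed
  then have AB: "A \<union> B = P" unfolding A_def B_def by blast
  have "A \<inter> B = {}"
  proof (rule ccontr)
    assume "A \<inter> B \<noteq> {}"
    then obtain x where "x n = c \<or> x n = (c+3) mod 4" "x n = (c+2) mod 4 \<or> x n = ((c+2) mod 4+3) mod 4"
      unfolding A_def B_def by blast
    then show False by (rule l5[OF c])
  qed
  moreover have "finite A" "finite B" using fin unfolding A_def B_def by simp_all
  ultimately have "card A + card B = card P"
    using card_Un_disjoint AB by metis
  then show ?thesis using card_lay[OF P c] card_lay[OF P c2] unfolding A_def B_def by simp
qed



lemma packing_reps: "cube_packing d P \<Longrightarrow> P \<subseteq> cube_reps d"
  by (simp add: cube_packing_def)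

lemma F1: "a \<in> {0..3} \<Longrightarrow> c \<in> {0..3} \<Longrightarrow> ((c+1) mod 4 - a) mod 4 \<in> {0,1} \<Longrightarrow> (c - a) mod 4 \<notin> {0,1} \<Longrightarrow> a = (c+1) mod 4"
  for a c :: int by (drule cases4)+ (elim disjE; simp)
lemma F2: "a \<in> {0..3} \<Longrightarrow> c \<in> {0..3} \<Longrightarrow> ((c+3) mod 4 - a) mod 4 \<in> {0,1} \<Longrightarrow> (c - a) mod 4 \<notin> {0,1} \<Longrightarrow> a = (c+2) mod 4"
  for a c :: int by (drule cases4)+ (elim disjE; simp)
lemma F4: "c \<in> {0..3} \<Longrightarrow> \<bar>(c+1) mod 4 - (c+2) mod 4\<bar> \<noteq> 2 \<and> \<bar>(c+3) mod 4 - (c+2) mod 4\<bar> \<noteq> 2"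
  for c :: int by (drule cases4)+ (elim disjE; simp)
lemma G1: "a \<in> {0..3} \<Longrightarrow> c \<in> {0..3} \<Longrightarrow> (c' = (c+1) mod 4 \<and> t = c' \<or> c' = (c+3) mod 4 \<and> t = (c+2) mod 4)
   \<Longrightarrow> (a - t) mod 4 \<in> {0,1} \<Longrightarrow> a = c' \<or> a = (c+2) mod 4"
  for a c c' t :: int by (drule cases4)+ (elim disjE; auto)
lemma G2: "c \<in> {0..3} \<Longrightarrow> (c' = (c+1) mod 4 \<or> c' = (c+3) mod 4) \<Longrightarrow>
   ((c'+1) mod 4 = c \<and> (c'+3) mod 4 = (c+2) mod 4) \<or> ((c'+1) mod 4 = (c+2) mod 4 \<and> (c'+3) mod 4 = c)"
  for c c' :: int by (drule cases4)+ (elim disjE; auto)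
lemma G3: "a \<in> {0..3} \<Longrightarrow> t \<in> {0..3} \<Longrightarrow> (a - t) mod 4 \<in> {0,1} \<Longrightarrow> a = t \<or> a = (t+1) mod 4"
  for a t :: int by (drule cases4)+ (elim disjE; simp)
lemma G4: "c \<in> {0..3} \<Longrightarrow> ((c+1) mod 4 - c) mod 4 \<in> {0,1} \<and> (c - (c+3) mod 4) mod 4 \<in> {0,1}"
  for c :: int by (drule cases4)+ (elim disjE; simp)
lemma G5: "a \<in> {0..3} \<Longrightarrow> c \<in> {0..3} \<Longrightarrow> ((c+3) mod 4 - a) mod 4 \<in> {0,1} \<Longrightarrow> a = (c+3) mod 4 \<or> a = (c+2) mod 4"
  for a c :: int by (drule cases4)+ (elim disjE; simp)
lemma K: "a \<in> {0..3} \<Longrightarrow> b \<in> {0..3} \<Longrightarrow> m \<in> {0..3} \<Longrightarrow> (m-a) mod 4 \<in> {0,1} \<Longrightarrow> (m-b) mod 4 \<in> {0,1} \<Longrightarrow> a \<noteq> b \<Longrightarrow>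
   (let a' = (if (m-a) mod 4 = 0 then (a+1) mod 4 else a) in a' \<in> {0..3} \<and> (a'-a) mod 4 \<in> {0,1} \<and> (a'-b) mod 4 \<notin> {0,1})"
  for a b m :: int by (drule cases4)+ (elim disjE; simp)
lemma mod4_range[simp]: "(c::int) mod 4 \<in> {0..3}" by simp

lemma bound: "cube_packing d P \<Longrightarrow> card P \<le> 2^d"
proof (induction d arbitrary: P)
  case 0
  have "P \<subseteq> {\<lambda>_. 0}" using 0 by (auto simp: cube_packing_def cube_reps_def)
  then have "P = {} \<or> P = {\<lambda>_. 0}" by blast
  then show ?case by auto
next
  case (Suc n)
  have "card (lay n P 0) + card (lay n P 2) = card P" using card_lay_pair[OF Suc.prems, of 0] by simp
  moreover have "card (lay n P 0) \<le> 2^n" using Suc.IH lay_pack(1)[OF Suc.prems, of 0] by simp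
  moreover have "card (lay n P 2) \<le> 2^n" using Suc.IH lay_pack(1)[OF Suc.prems, of 2] by simp
  ultimately show ?case by simp
qed

lemma cover: "cube_packing d P \<Longrightarrow> card P = 2^d \<Longrightarrow> z \<in> cube_reps d \<Longrightarrow> \<not> hole d P z"
proof (induction d arbitrary: P z)
  case 0
  then have "P \<noteq> {}" by auto
  then obtain x where "x \<in> P" by blast
  moreover have "cov 0 x z" by (simp add: cov_def)
  ultimately show ?case by (auto simp: hole_def)
next
  case (Suc n)
  define c where "c = z n"
  define w where "w = z(n:=0)"
  have c: "c \<in> {0..3}" using Suc.prems(3) by (simp add: c_def cube_reps_def)
  have w: "w \<in> cube_reps n" using reps_Suc[OF Suc.prems(3)] by (simp add: w_def)
  have zw: "z = w(n:=c)" by (simp add: w_def c_def)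
  have "card (lay n P c) + card (lay n P ((c+2) mod 4)) = 2^(Suc n)"
    using card_lay_pair[OF Suc.prems(1) c] Suc.prems(2) by simp
  moreover have "card (lay n P c) \<le> 2^n" using bound lay_pack(1)[OF Suc.prems(1) c] by blast
  moreover have "card (lay n P ((c+2) mod 4)) \<le> 2^n" using bound lay_pack(1)[OF Suc.prems(1), of "(c+2) mod 4"] by simp
  ultimately have "card (lay n P c) = 2^n" by simp
  then have "\<not> hole n (lay n P c) w" using Suc.IH lay_pack(1)[OF Suc.prems(1) c] w by blast
  then have "\<not> hole (Suc n) P (w(n:=c))" using hole_layer[OF packing_reps[OF Suc.prems(1)] c] by blast
  then show ?case unfolding zw .
qed

lemma ins_pack:
  assumes Q: "cube_packing d Q" and y: "y \<in> cube_reps d" and f: "free d Q y"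
  shows "cube_packing d (insert y Q)" "y \<notin> Q"
proof -
  show "y \<notin> Q"
  proof
    assume "y \<in> Q" then obtain i where "\<bar>y i - y i\<bar> = 2" using f by (auto simp: free_def)
    then show False by simp
  qed
  show "cube_packing d (insert y Q)"
    using Q y f unfolding cube_packing_def free_def by (auto simp: abs_minus_commute)
qed

lemma hole_exact:
  assumes Q: "cube_packing n Q" and cQ: "card Q + 1 = 2^n" and a: "\<alpha> \<in> cube_reps n" and f: "free n Q \<alpha>"
    and w: "w \<in> cube_reps n"
  shows "hole n Q w \<longleftrightarrow> cov n \<alpha> w"
proof
  assume "cov n \<alpha> w" then show "hole n Q w" using f free_cells[OF a packing_reps[OF Q]] w by blast
next
  assume h: "hole n Q w"
  have fin: "finite Q" using packing_reps[OF Q] finite_reps finite_subset by blast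
  have "card (insert \<alpha> Q) = 2^n" using ins_pack(2)[OF Q a f] fin cQ by simp
  then have "\<not> hole n (insert \<alpha> Q) w" using cover ins_pack(1)[OF Q a f] w by blast
  then obtain x where "x \<in> insert \<alpha> Q" "cov n x w" by (auto simp: hole_def)
  then show "cov n \<alpha> w" using h by (auto simp: hole_def)
qed

lemma fiber:
  assumes P: "cube_packing (Suc n) P" and c: "c \<in> {0..3}" and w: "w \<in> cube_reps n"
    and h: "hole (Suc n) P (w(n:=c))"
  shows "hole (Suc n) P (w(n:=(c+1) mod 4)) \<or> hole (Suc n) P (w(n:=(c+3) mod 4))"
proof (rule ccontr)
  assume "\<not> ?thesis"
  then obtain x y where x: "x \<in> P" "cov (Suc n) x (w(n:=(c+1) mod 4))"
    and y: "y \<in> P" "cov (Suc n) y (w(n:=(c+3) mod 4))" by (auto simp: hole_def)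
  have xc: "\<not> cov (Suc n) x (w(n:=c))" "\<not> cov (Suc n) y (w(n:=c))" using h x(1) y(1) by (auto simp: hole_def)
  have xr: "x \<in> cube_reps (Suc n)" "y \<in> cube_reps (Suc n)" using P x(1) y(1) by (auto simp: cube_packing_def)
  then have xn: "x n \<in> {0..3}" "y n \<in> {0..3}" by (auto simp: cube_reps_def)
  have cx: "cov n x w" "((c+1) mod 4 - x n) mod 4 \<in> {0,1}" using x(2) by (auto simp: cov_Suc cov_upd2)
  have cy: "cov n y w" "((c+3) mod 4 - y n) mod 4 \<in> {0,1}" using y(2) by (auto simp: cov_Suc cov_upd2)
  have "(c - x n) mod 4 \<notin> {0,1}" using xc(1) cx(1) by (auto simp: cov_Suc cov_upd2)
  then have xv: "x n = (c+1) mod 4" using F1[OF xn(1) c cx(2)] by blast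
  have "(c - y n) mod 4 \<notin> {0,1}" using xc(2) cy(1) by (auto simp: cov_Suc cov_upd2)
  then have yv: "y n = (c+2) mod 4" using F2[OF xn(2) c cy(2)] by blast
  have "x \<noteq> y" using xv yv c by (drule_tac cases4) (elim disjE; auto)
  then obtain i where i: "i < Suc n" "\<bar>x i - y i\<bar> = 2" using P x(1) y(1) unfolding cube_packing_def by blast
  show False
  proof (cases "i = n")
    case True then show False using i(2) xv yv F4[OF c] by simp
  next
    case False
    then have "i < n" using i(1) by simp
    then have "(w i - x i) mod 4 \<in> {0,1}" "(w i - y i) mod 4 \<in> {0,1}" using cx(1) cy(1) by (auto simp: cov_def)
    moreover have "x i \<in> {0..3}" "y i \<in> {0..3}" using xr \<open>i < n\<close> by (auto simp: cube_reps_def)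
    ultimately show False using C1 i(2) by metis
  qed
qed



definition EXT :: "nat \<Rightarrow> bool" where
  "EXT n \<longleftrightarrow> (\<forall>Q e. cube_packing n Q \<and> card Q + e = 2^n \<and> e \<in> {1,2,3} \<longrightarrow> (\<exists>y\<in>cube_reps n. free n Q y))"

lemma upd_eq: "z n = v \<Longrightarrow> (z(n:=0))(n:=v) = z"
  by (auto simp: fun_eq_iff)

lemma stepZ:
  assumes IH: "EXT n" and P: "cube_packing (Suc n) P" and c: "c \<in> {0..3}"
    and full: "card (lay n P c) = 2^n"
    and cc: "c' = (c+1) mod 4 \<and> t = c' \<or> c' = (c+3) mod 4 \<and> t = (c+2) mod 4"
    and lt: "card (lay n P c') < 2^n" and ge: "2^n \<le> card (lay n P c') + 3"
  shows "\<exists>y\<in>cube_reps (Suc n). free (Suc n) P y"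
proof -
  have c'r: "c' \<in> {0..3}" "t \<in> {0..3}" using cc by auto
  have Qp: "cube_packing n (lay n P c')" using lay_pack(1)[OF P c'r(1)] .
  define e where "e = 2^n - card (lay n P c')"
  have e: "card (lay n P c') + e = 2^n" "e \<in> {1,2,3}"
  proof -
    show "card (lay n P c') + e = 2^n" using lt unfolding e_def by simp
    have "e = 1 \<or> e = 2 \<or> e = 3" using lt ge unfolding e_def by arith
    then show "e \<in> {1,2,3}" by blast
  qed
  obtain \<alpha> where \<alpha>: "\<alpha> \<in> cube_reps n" "free n (lay n P c') \<alpha>" using IH Qp e unfolding EXT_def by blast
  define y where "y = \<alpha>(n:=t)"
  have y: "y \<in> cube_reps (Suc n)" using reps_upd[OF \<alpha>(1) c'r(2)] y_def by simp
  have "free (Suc n) P y" unfolding free_cells[OF y packing_reps[OF P]]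
  proof (intro ballI impI)
    fix z assume z: "z \<in> cube_reps (Suc n)" "cov (Suc n) y z"
    define w where "w = z(n:=0)"
    have w: "w \<in> cube_reps n" using reps_Suc[OF z(1)] w_def by simp
    have zn: "z n \<in> {0..3}" using z(1) by (simp add: cube_reps_def)
    have cw: "cov n \<alpha> w" using z(2) by (simp add: y_def w_def cov_Suc cov_upd1 cov_upd2)
    have tn: "(z n - t) mod 4 \<in> {0,1}" using z(2) by (simp add: y_def cov_Suc)
    have h1: "hole n (lay n P c') w" using \<alpha>(2) free_cells[OF \<alpha>(1) packing_reps[OF Qp]] cw w by blast
    have h1': "hole (Suc n) P (w(n:=c'))" using hole_layer[OF packing_reps[OF P] c'r(1)] h1 by blast
    have nh: "\<not> hole (Suc n) P (w(n:=c))"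
      using hole_layer[OF packing_reps[OF P] c] cover[OF lay_pack(1)[OF P c] full w] by blast
    have "z n = c' \<or> z n = (c+2) mod 4" using G1[OF zn c cc tn] .
    then show "hole (Suc n) P z"
    proof
      assume "z n = c'"
      then have "w(n:=c') = z" unfolding w_def by (rule upd_eq)
      then show ?thesis using h1' by simp
    next
      assume zc: "z n = (c+2) mod 4"
      have f: "hole (Suc n) P (w(n:=(c'+1) mod 4)) \<or> hole (Suc n) P (w(n:=(c'+3) mod 4))"
        using fiber[OF P c'r(1) w h1'] .
      have "c' = (c+1) mod 4 \<or> c' = (c+3) mod 4" using cc by blast
      then have "((c'+1) mod 4 = c \<and> (c'+3) mod 4 = (c+2) mod 4) \<or> ((c'+1) mod 4 = (c+2) mod 4 \<and> (c'+3) mod 4 = c)"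
        using G2[OF c] by blast
      then have "hole (Suc n) P (w(n:=c)) \<or> hole (Suc n) P (w(n:=(c+2) mod 4))"
        using f by (elim disjE conjE) simp_all
      then have "hole (Suc n) P (w(n:=(c+2) mod 4))" using nh by blast
      moreover have "w(n:=(c+2) mod 4) = z" unfolding w_def using zc by (rule upd_eq)
      ultimately show ?thesis by simp
    qed
  qed
  then show ?thesis using y by blast
qed

lemma stepE:
  assumes IH: "EXT n" and P: "cube_packing (Suc n) P" and c: "c \<in> {0..3}"
    and e0: "card (lay n P c) + 1 = 2^n" and e1: "card (lay n P ((c+1) mod 4)) + 1 = 2^n"
  shows "\<exists>y\<in>cube_reps (Suc n). free (Suc n) P y"
proof -
  define c1 where "c1 = (c+1) mod 4"
  define cm where "cm = (c+3) mod 4"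
  have c1: "c1 \<in> {0..3}" and cm: "cm \<in> {0..3}" by (simp_all add: c1_def cm_def)
  have Pr: "P \<subseteq> cube_reps (Suc n)" using packing_reps[OF P] .
  have Q0: "cube_packing n (lay n P c)" using lay_pack(1)[OF P c] .
  have Q1: "cube_packing n (lay n P c1)" using lay_pack(1)[OF P c1] .
  have e1': "card (lay n P c1) + 1 = 2^n" using e1 by (simp add: c1_def)
  obtain \<alpha> where \<alpha>: "\<alpha> \<in> cube_reps n" "free n (lay n P c) \<alpha>" using IH Q0 e0 unfolding EXT_def by blast
  obtain \<beta> where \<beta>: "\<beta> \<in> cube_reps n" "free n (lay n P c1) \<beta>" using IH Q1 e1' unfolding EXT_def by blast
  have h\<alpha>: "hole (Suc n) P (w(n:=c)) \<longleftrightarrow> cov n \<alpha> w" if "w \<in> cube_reps n" for w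
    using hole_layer[OF Pr c] hole_exact[OF Q0 e0 \<alpha> that] by blast
  have h\<beta>: "hole (Suc n) P (w(n:=c1)) \<longleftrightarrow> cov n \<beta> w" if "w \<in> cube_reps n" for w
    using hole_layer[OF Pr c1] hole_exact[OF Q1 e1' \<beta> that] by blast
  have X1: "hole (Suc n) P (w(n:=cm))" if w: "w \<in> cube_reps n" "cov n \<alpha> w" "\<not> cov n \<beta> w" for w
  proof -
    have "hole (Suc n) P (w(n:=c))" using h\<alpha> w by blast
    from fiber[OF P c w(1) this] have "hole (Suc n) P (w(n:=c1)) \<or> hole (Suc n) P (w(n:=cm))"
      unfolding c1_def cm_def .
    moreover have "\<not> hole (Suc n) P (w(n:=c1))" using h\<beta> w by blast
    ultimately show ?thesis by blast
  qed
  show ?thesis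
  proof (cases "\<alpha> = \<beta>")
    case True
    define y where "y = \<alpha>(n:=c)"
    have y: "y \<in> cube_reps (Suc n)" using reps_upd[OF \<alpha>(1) c] y_def by simp
    have "free (Suc n) P y" unfolding free_cells[OF y Pr]
    proof (intro ballI impI)
      fix z assume z: "z \<in> cube_reps (Suc n)" "cov (Suc n) y z"
      define w where "w = z(n:=0)"
      have w: "w \<in> cube_reps n" using reps_Suc[OF z(1)] w_def by simp
      have zn: "z n \<in> {0..3}" using z(1) by (simp add: cube_reps_def)
      have cw: "cov n \<alpha> w" using z(2) by (simp add: y_def w_def cov_Suc cov_upd1 cov_upd2)
      have tn: "(z n - c) mod 4 \<in> {0,1}" using z(2) by (simp add: y_def cov_Suc)
      have "z n = c \<or> z n = c1" using G3[OF zn c tn] by (simp add: c1_def)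
      then show "hole (Suc n) P z"
      proof
        assume "z n = c"
        then have "w(n:=c) = z" unfolding w_def by (rule upd_eq)
        then show ?thesis using h\<alpha>[OF w] cw by simp
      next
        assume "z n = c1"
        then have "w(n:=c1) = z" unfolding w_def by (rule upd_eq)
        then show ?thesis using h\<beta>[OF w] cw True by simp
      qed
    qed
    then show ?thesis using y by blast
  next
    case False
    have X: "hole (Suc n) P (w(n:=cm))" if w: "w \<in> cube_reps n" "cov n \<alpha> w" for w
    proof (cases "cov n \<beta> w")
      case False then show ?thesis using X1 w by blast
    next
      case True
      have "\<exists>k<n. \<alpha> k \<noteq> \<beta> k"
      proof (rule ccontr)
        assume "\<not> (\<exists>k<n. \<alpha> k \<noteq> \<beta> k)"
        then have "\<forall>k<n. \<alpha> k = \<beta> k" by blast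
        moreover have "\<forall>k\<ge>n. \<alpha> k = \<beta> k" using \<alpha>(1) \<beta>(1) by (simp add: cube_reps_def)
        ultimately have "\<alpha> = \<beta>" by (metis ext not_le)
        then show False using \<open>\<alpha> \<noteq> \<beta>\<close> by simp
      qed
      then obtain k where k: "k < n" "\<alpha> k \<noteq> \<beta> k" by blast
      define a where "a = \<alpha> k"
      define b where "b = \<beta> k"
      define m where "m = w k"
      have ar: "a \<in> {0..3}" "b \<in> {0..3}" "m \<in> {0..3}" using \<alpha>(1) \<beta>(1) w(1) k(1)
        by (simp_all add: a_def b_def m_def cube_reps_def)
      have ma: "(m - a) mod 4 \<in> {0,1}" using w(2) k(1) by (simp add: cov_def a_def m_def)
      have mb: "(m - b) mod 4 \<in> {0,1}" using True k(1) by (simp add: cov_def b_def m_def)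
      have ab: "a \<noteq> b" using k(2) by (simp add: a_def b_def)
      define a' where "a' = (if (m-a) mod 4 = 0 then (a+1) mod 4 else a)"
      define b' where "b' = (if (m-b) mod 4 = 0 then (b+1) mod 4 else b)"
      have Ka: "a' \<in> {0..3}" "(a'-a) mod 4 \<in> {0,1}" "(a'-b) mod 4 \<notin> {0,1}"
        using K[OF ar(1,2,3) ma mb ab] unfolding a'_def Let_def by simp_all
      have Kb: "b' \<in> {0..3}" "(b'-b) mod 4 \<in> {0,1}" "(b'-a) mod 4 \<notin> {0,1}"
        using K[OF ar(2,1,3) mb ma ab[symmetric]] unfolding b'_def Let_def by simp_all
      define u where "u = w(k:=b')"
      define u' where "u' = w(k:=a')"
      have u: "u \<in> cube_reps n" using w(1) k(1) Kb(1) by (auto simp: u_def cube_reps_def)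
      have u': "u' \<in> cube_reps n" using w(1) k(1) Ka(1) by (auto simp: u'_def cube_reps_def)
      have cbu: "cov n \<beta> u" using True Kb(2) unfolding cov_def u_def b_def by auto
      have ncau: "\<not> cov n \<alpha> u" using Kb(3) k(1) unfolding cov_def u_def a_def by auto
      have cau': "cov n \<alpha> u'" using w(2) Ka(2) unfolding cov_def u'_def a_def by auto
      have ncbu': "\<not> cov n \<beta> u'" using Ka(3) k(1) unfolding cov_def u'_def b_def by auto
      have hu': "hole (Suc n) P (u'(n:=cm))" using X1[OF u' cau' ncbu'] .
      have hu1: "hole (Suc n) P (u(n:=c1))" using h\<beta>[OF u] cbu by simp
      have nhu0: "\<not> hole (Suc n) P (u(n:=c))" using h\<alpha>[OF u] ncau by simp
      obtain x where x: "x \<in> P" "cov (Suc n) x (u(n:=c))" using nhu0 unfolding hole_def by blast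
      have xr: "x \<in> cube_reps (Suc n)" using Pr x(1) by blast
      have xn: "x n \<in> {0..3}" using xr by (simp add: cube_reps_def)
      have cxu: "cov n x u" "(c - x n) mod 4 \<in> {0,1}" using x(2) by (simp_all add: cov_Suc cov_upd2)
      have "x n = c \<or> x n = cm" using layer_arith[OF xn c] cxu(2) by (simp add: cm_def)
      moreover have "x n \<noteq> c"
      proof
        assume "x n = c"
        then have "cov (Suc n) x (u(n:=c1))" using cxu(1) G4[OF c] by (simp add: cov_Suc cov_upd2 c1_def)
        then show False using hu1 x(1) unfolding hole_def by blast
      qed
      ultimately have xcm: "x n = cm" by blast
      have "x(n:=0) \<in> lay n P c" unfolding lay_def using x(1) xcm by (auto simp: cm_def)
      then obtain i where i: "i < n" "\<bar>(x(n:=0)) i - \<alpha> i\<bar> = 2" using \<alpha>(2) unfolding free_def by blast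
      have ixa: "\<bar>x i - \<alpha> i\<bar> = 2" using i by simp
      have ik: "i = k"
      proof (rule ccontr)
        assume "i \<noteq> k"
        then have "(w i - x i) mod 4 \<in> {0,1}" using cxu(1) i(1) unfolding cov_def u_def by auto
        moreover have "(w i - \<alpha> i) mod 4 \<in> {0,1}" using w(2) i(1) unfolding cov_def by auto
        moreover have "x i \<in> {0..3}" "\<alpha> i \<in> {0..3}" using xr \<alpha>(1) i(1) by (simp_all add: cube_reps_def)
        ultimately show False using C1 ixa by metis
      qed
      have xk: "\<bar>x k - a\<bar> = 2" using ixa ik by (simp add: a_def)
      show ?thesis
      proof (rule ccontr)
        assume "\<not> hole (Suc n) P (w(n:=cm))"
        then obtain y where y: "y \<in> P" "cov (Suc n) y (w(n:=cm))" unfolding hole_def by blast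
        have yr: "y \<in> cube_reps (Suc n)" using Pr y(1) by blast
        have yn: "y n \<in> {0..3}" using yr by (simp add: cube_reps_def)
        have cyw: "cov n y w" "(cm - y n) mod 4 \<in> {0,1}" using y(2) by (simp_all add: cov_Suc cov_upd2)
        have "y n = cm \<or> y n = (c+2) mod 4" using G5[OF yn c] cyw(2) by (simp add: cm_def)
        moreover have "y n \<noteq> cm"
        proof
          assume "y n = cm"
          then have "cov (Suc n) y (w(n:=c))" using cyw(1) G4[OF c] by (simp add: cov_Suc cov_upd2 cm_def)
          moreover have "hole (Suc n) P (w(n:=c))" using h\<alpha>[OF w(1)] w(2) by simp
          ultimately show False using y(1) unfolding hole_def by blast
        qed
        ultimately have ycm: "y n = (c+2) mod 4" by blast
        have "x \<noteq> y" using xcm ycm c unfolding cm_def by (drule_tac cases4) (elim disjE; auto)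
        then obtain j where j: "j < Suc n" "\<bar>x j - y j\<bar> = 2" using P x(1) y(1) unfolding cube_packing_def by blast
        show False
        proof (cases "j = n")
          case True then show False using j(2) xcm ycm F4[OF c] by (simp add: cm_def)
        next
          case False
          then have jn: "j < n" using j(1) by simp
          have yjr: "x j \<in> {0..3}" "y j \<in> {0..3}" using xr yr jn by (simp_all add: cube_reps_def)
          show False
          proof (cases "j = k")
            case False
            then have "(w j - x j) mod 4 \<in> {0,1}" using cxu(1) jn unfolding cov_def u_def by auto
            moreover have "(w j - y j) mod 4 \<in> {0,1}" using cyw(1) jn unfolding cov_def by auto
            ultimately show False using C1 yjr j(2) by metis
          next
            case True
            have "x k \<in> {0..3}" "y k \<in> {0..3}" using yjr True by simp_all
            then have yka: "y k = a" using C3[OF ar(1) _ _ xk] j(2) True by simp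
            have "cov n y u'" using cyw(1) Ka(2) yka unfolding cov_def u'_def by auto
            then have "cov (Suc n) y (u'(n:=cm))" using cyw(2) by (simp add: cov_Suc cov_upd2)
            then show False using hu' y(1) unfolding hole_def by blast
          qed
        qed
      qed
    qed
    define y where "y = \<alpha>(n:=cm)"
    have y: "y \<in> cube_reps (Suc n)" using reps_upd[OF \<alpha>(1) cm] y_def by simp
    have "free (Suc n) P y" unfolding free_cells[OF y Pr]
    proof (intro ballI impI)
      fix z assume z: "z \<in> cube_reps (Suc n)" "cov (Suc n) y z"
      define w where "w = z(n:=0)"
      have w: "w \<in> cube_reps n" using reps_Suc[OF z(1)] w_def by simp
      have zn: "z n \<in> {0..3}" using z(1) by (simp add: cube_reps_def)
      have cw: "cov n \<alpha> w" using z(2) by (simp add: y_def w_def cov_Suc cov_upd1 cov_upd2)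
      have tn: "(z n - cm) mod 4 \<in> {0,1}" using z(2) by (simp add: y_def cov_Suc)
      have "z n = cm \<or> z n = c" using G3[OF zn cm tn] c unfolding cm_def by (drule_tac cases4) (elim disjE; auto)
      then show "hole (Suc n) P z"
      proof
        assume "z n = cm"
        then have "w(n:=cm) = z" unfolding w_def by (rule upd_eq)
        then show ?thesis using X[OF w cw] by simp
      next
        assume "z n = c"
        then have "w(n:=c) = z" unfolding w_def by (rule upd_eq)
        then show ?thesis using h\<alpha>[OF w] cw by simp
      qed
    qed
    then show ?thesis using y by blast
  qed
qed

lemma arith12:
  fixes q0 q1 q2 q3 N S \<delta> :: nat
  assumes "q0 \<le> N" "q1 \<le> N" "q2 \<le> N" "q3 \<le> N" "q0 + q2 = S" "q1 + q3 = S" "S + \<delta> = 2*N" "\<delta> \<in> {1,2,3}"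
  shows "(q0 = N \<and> q1 < N \<and> N \<le> q1 + 3) \<or> (q0 = N \<and> q3 < N \<and> N \<le> q3 + 3) \<or>
         (q1 = N \<and> q2 < N \<and> N \<le> q2 + 3) \<or> (q1 = N \<and> q0 < N \<and> N \<le> q0 + 3) \<or>
         (q2 = N \<and> q3 < N \<and> N \<le> q3 + 3) \<or> (q2 = N \<and> q1 < N \<and> N \<le> q1 + 3) \<or>
         (q3 = N \<and> q0 < N \<and> N \<le> q0 + 3) \<or> (q3 = N \<and> q2 < N \<and> N \<le> q2 + 3) \<or>
         (q0 + 1 = N \<and> q1 + 1 = N) \<or> (q1 + 1 = N \<and> q2 + 1 = N) \<or>
         (q2 + 1 = N \<and> q3 + 1 = N) \<or> (q3 + 1 = N \<and> q0 + 1 = N)"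
  using assms
  apply (cases "q0 = N"; cases "q1 = N"; cases "q2 = N"; cases "q3 = N")
  apply (simp_all)
  apply arith+
  done

lemma ext_all: "EXT d"
proof (induction d)
  case 0
  show ?case unfolding EXT_def
  proof (intro allI impI)
    fix Q and e :: nat assume a: "cube_packing 0 Q \<and> card Q + e = 2^0 \<and> e \<in> {1,2,3}"
    have fin: "finite Q" using packing_reps a finite_reps finite_subset by blast
    have "card Q = 0" using a by auto
    then have "Q = {}" using fin by simp
    moreover have "(\<lambda>_. 0) \<in> cube_reps 0" by (simp add: cube_reps_def)
    ultimately show "\<exists>y\<in>cube_reps 0. free 0 Q y" by (auto simp: free_def)
  qed
next
  case (Suc n)
  show ?case unfolding EXT_def
  proof (intro allI impI)
    fix P and \<delta> :: nat assume a: "cube_packing (Suc n) P \<and> card P + \<delta> = 2^Suc n \<and> \<delta> \<in> {1,2,3}"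
    have P: "cube_packing (Suc n) P" using a by blast
    have bd: "card (lay n P c) \<le> 2^n" if "c \<in> {0..3}" for c using bound lay_pack(1)[OF P that] by blast
    have s02: "card (lay n P 0) + card (lay n P 2) = card P" using card_lay_pair[OF P, of 0] by simp
    have s13: "card (lay n P 1) + card (lay n P 3) = card P" using card_lay_pair[OF P, of 1] by simp
    have "card P + \<delta> = 2 * 2^n" using a by simp
    from arith12[OF bd[of 0] bd[of 1] bd[of 2] bd[of 3] s02 s13 this] a
    show "\<exists>y\<in>cube_reps (Suc n). free (Suc n) P y"
    proof (elim disjE conjE)
    qed (auto intro: stepZ[OF Suc.IH P, of 0 1 1] stepZ[OF Suc.IH P, of 0 3 2]
           stepZ[OF Suc.IH P, of 1 2 2] stepZ[OF Suc.IH P, of 1 0 3]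
           stepZ[OF Suc.IH P, of 2 3 3] stepZ[OF Suc.IH P, of 2 1 0]
           stepZ[OF Suc.IH P, of 3 0 0] stepZ[OF Suc.IH P, of 3 2 1]
           stepE[OF Suc.IH P, of 0] stepE[OF Suc.IH P, of 1] stepE[OF Suc.IH P, of 2] stepE[OF Suc.IH P, of 3])
  qed
qed

lemma to_tiling: "cube_packing d P \<Longrightarrow> card P + e = 2^d \<Longrightarrow> e \<le> 3 \<Longrightarrow> \<exists>T. cube_tiling d T \<and> P \<subseteq> T"
proof (induction e arbitrary: P)
  case 0
  then show ?case by (auto simp: cube_tiling_def)
next
  case (Suc e)
  have "Suc e \<in> {1,2,3}" using Suc.prems(3) by auto
  then obtain y where y: "y \<in> cube_reps d" "free d P y" using ext_all Suc.prems(1,2) unfolding EXT_def by blast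
  have fin: "finite P" using packing_reps[OF Suc.prems(1)] finite_reps finite_subset by blast
  have P': "cube_packing d (insert y P)" using ins_pack(1)[OF Suc.prems(1) y] .
  have "card (insert y P) = card P + 1" using ins_pack(2)[OF Suc.prems(1) y] fin by simp
  then have "card (insert y P) + e = 2^d" using Suc.prems(2) by simp
  then obtain T where "cube_tiling d T" "insert y P \<subseteq> T" using Suc.IH[OF P'] Suc.prems(3) by auto
  then show ?case by blast
qed

theorem theorem2:
  fixes d \<delta> :: nat and P :: "(nat \<Rightarrow> int) set"
  assumes "d \<ge> 1" and "\<delta> \<in> {1, 2, 3}"
    and "cube_packing d P" and "int (card P) = 2 ^ d - int \<delta>"
  shows "\<exists>T. cube_tiling d T \<and> P \<subseteq> T"
proof -
  have "int (card P + \<delta>) = int (2^d)" using assms(4) by simp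
  then have "card P + \<delta> = 2^d" by (simp only: of_nat_eq_iff)
  moreover have "\<delta> \<le> 3" using assms(2) by auto
  ultimately show ?thesis using to_tiling assms(3) by blast
qed

end
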